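(* Let $r\ge 1$ and $m\ge 0$ be integers. Then for every integer $k\ge 0$, $$(-1)^{\binom{r}{2}}\det\left(\binom{k+i+j}{m+r-1}\right)_{i,j=0}^{r-1}=\left\langle \begin{matrix} k\\ m\end{matrix}\right\rangle_r .$$ Equivalently, the matrix $\left((-1)^{\binom r2}\det\left(\binom{k+i+j}{m+r-1}\right)_{i,j=0}^{r-1}\right)_{k,m\ge 0}$ equals the $r$-Hoggatt matrix $\left(\left\langle \begin{smallmatrix} k\\ m\end{smallmatrix}\right\rangle_r\right)_{k,m\ge0}$.
   Context: For an integer $x$ and integer $r>0$ the rising factorial is $x^{(r)}=x(x+1)\cdots(x+r-1)$, with $x^{(0)}=1$. For a positive integer $r$ and integers $n,k$ the $r$-Hoggatt binomial is defined by $$\left\langle \begin{matrix} n\\ k\end{matrix}\right\rangle_r=\prod_{j=1}^{k}\frac{(n-k+j)^{(r)}}{(j)^{(r)}}\quad\text{for }0\le k\le n,$$ (an empty product being $1$), and $\left\langle \begin{smallmatrix} n\\ k\end{smallmatrix}\right\rangle_r=0$ otherwise. Binomial coefficients $\binom{a}{b}$ for integers $a\ge0$, $b\ge 0$ are the usual ones (zero if $b>a$). *)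

theory Defs
  imports Main "Jordan_Normal_Form.Determinant"
begin

text \<open>Rising factorial x^(r) = x(x+1)...(x+r-1) is the library's pochhammer.
  The r-Hoggatt binomial, defined for integers n, k; valued in the rationals
  (it is an integer, but the defining formula is a quotient).\<close>

definition hoggatt :: "nat \<Rightarrow> int \<Rightarrow> int \<Rightarrow> rat" where
  "hoggatt r n k =
     (if 0 \<le> k \<and> k \<le> n then
        (\<Prod>j\<in>{1..nat k}. pochhammer (of_int (n - k + int j)) r / pochhammer (of_nat j) r)
      else 0)"

end

theory Submission
  imports Defs
begin


lemma det_scale:
  fixes B :: "'a::comm_ring_1 mat"
  assumes B: "B \<in> carrier_mat n n"
  shows "det (mat n n (\<lambda>(i,j). a i * b j * B$$(i,j))) = prod a {0..<n} * prod b {0..<n} * det B"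
proof -
  have C: "mat n n (\<lambda>(i,j). a i * b j * B$$(i,j)) \<in> carrier_mat n n" by auto
  show ?thesis unfolding det_def'[OF C] det_def'[OF B] sum_distrib_left
  proof (rule sum.cong[OF refl])
    fix p assume "p \<in> {p. p permutes {0..<n}}"
    hence p: "p permutes {0..<n}" by auto
    have pi: "\<And>i. i < n \<Longrightarrow> p i < n" using p by (meson atLeastLessThan_iff permutes_in_image zero_le)
    have "(\<Prod>i\<in>{0..<n}. mat n n (\<lambda>(i,j). a i * b j * B$$(i,j)) $$ (i, p i))
        = (\<Prod>i\<in>{0..<n}. a i * b (p i) * B$$(i, p i))"
      by (rule prod.cong, auto simp: pi)
    also have "\<dots> = prod a {0..<n} * prod (b \<circ> p) {0..<n} * (\<Prod>i\<in>{0..<n}. B$$(i, p i))"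
      by (simp add: prod.distrib)
    also have "prod (b \<circ> p) {0..<n} = prod b {0..<n}" using prod.permute[OF p, of b] by simp
    finally show "signof p * (\<Prod>i\<in>{0..<n}. mat n n (\<lambda>(i,j). a i * b j * B$$(i,j)) $$ (i, p i))
       = prod a {0..<n} * prod b {0..<n} * (signof p * (\<Prod>i\<in>{0..<n}. B $$ (i, p i)))"
      by (simp add: ac_simps)
  qed
qed

lemma det_J: "det (mat r r (\<lambda>(i,j). if i + j = r - 1 then 1 else 0) :: 'a::comm_ring_1 mat) = (-1)^(r choose 2)"
proof (induction r)
  case 0 show ?case by (simp add: det_dim_zero numeral_2_eq_2)
next
  case (Suc r)
  let ?J = "mat (Suc r) (Suc r) (\<lambda>(i,j). if i + j = Suc r - 1 then 1 else 0) :: 'a mat"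
  have "det ?J = (\<Sum>i<Suc r. ?J $$ (i,r) * cofactor ?J i r)"
    by (rule laplace_expansion_column, auto)
  also have "\<dots> = (\<Sum>i<Suc r. (if i = 0 then cofactor ?J 0 r else 0))"
    by (rule sum.cong, auto)
  also have "\<dots> = cofactor ?J 0 r" by simp
  also have "mat_delete ?J 0 r = mat r r (\<lambda>(i,j). if i + j = r - 1 then 1 else 0)"
    unfolding mat_delete_def by (rule eq_matI, auto)
  hence "cofactor ?J 0 r = (-1)^r * (-1)^(r choose 2)" unfolding cofactor_def using Suc by simp
  also have "\<dots> = (-1)^(Suc r choose 2)"
  proof -
    have "Suc r choose 2 = r + (r choose 2)" by (simp add: numeral_2_eq_2)
    thus ?thesis by (simp add: power_add)
  qed
  finally show ?case .
qed

lemma det_unit_lower: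
  fixes A :: "'a::comm_ring_1 mat"
  assumes A: "A \<in> carrier_mat n n" and l: "\<And>i j. i < j \<Longrightarrow> j < n \<Longrightarrow> A $$ (i,j) = 0"
  and d: "\<And>i. i < n \<Longrightarrow> A $$ (i,i) = 1"
  shows "det A = 1"
  using det_lower_triangular[OF l A] A d by (simp add: prod_list_diag_prod)

lemma det_B: "det (mat r r (\<lambda>(i,j). of_nat ((x+j) choose i)) :: rat mat) = 1"
proof -
  define C where "C = (mat r r (\<lambda>(i,l). if l \<le> i then of_nat (x choose (i-l)) else 0) :: rat mat)"
  define P where "P = (mat r r (\<lambda>(l,j). of_nat (j choose l)) :: rat mat)"
  have "mat r r (\<lambda>(i,j). of_nat ((x+j) choose i)) = C * P"
  proof (rule eq_matI)
    fix i j assume i: "i < dim_row (C * P)" and j: "j < dim_col (C * P)"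
    hence ir: "i < r" and jr: "j < r" by (auto simp: C_def P_def)
    have "(C * P) $$ (i,j) = (\<Sum>l\<in>{0..<r}. (if l \<le> i then of_nat (x choose (i-l)) else 0) * of_nat (j choose l))"
      using ir jr unfolding C_def P_def by (auto simp: scalar_prod_def intro!: sum.cong)
    also have "\<dots> = (\<Sum>l\<in>{0..<r}. if l \<le> i then of_nat ((j choose l) * (x choose (i-l))) else 0)"
      by (rule sum.cong, auto)
    also have "\<dots> = (\<Sum>l\<in>{l\<in>{0..<r}. l \<le> i}. of_nat ((j choose l) * (x choose (i-l))))"
      by (rule sum.inter_filter[symmetric], simp)
    also have "{l\<in>{0..<r}. l \<le> i} = {..i}" using ir by auto
    also have "(\<Sum>l\<in>{..i}. (of_nat ((j choose l) * (x choose (i-l))) :: rat)) = of_nat ((j + x) choose i)"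
      unfolding of_nat_sum[symmetric] vandermonde ..
    finally show "mat r r (\<lambda>(i,j). of_nat ((x+j) choose i)) $$ (i,j) = (C * P) $$ (i,j)"
      using ir jr by (simp add: add.commute)
  qed (auto simp: C_def P_def)
  also have "det (C * P) = det C * det P"
    by (rule det_mult, auto simp: C_def P_def)
  also have "det C = 1" by (rule det_unit_lower, auto simp: C_def)
  also have "det P = 1" by (rule det_upper_triangular[THEN trans], auto simp: P_def prod_list_diag_prod)
  finally show ?thesis by simp
qed

lemma aux_div: "(a::rat) * c = b * d \<Longrightarrow> c \<noteq> 0 \<Longrightarrow> a = 1/c * b * d"
  by (simp add: field_simps)

lemma det_A:
  assumes k: "k = m + x"
  shows "det (mat r r (\<lambda>(i,j). of_nat ((k+j) choose (m+i))) :: rat mat)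
     = (\<Prod>j\<in>{0..<r}. of_nat ((k+j) choose m)) / (\<Prod>i\<in>{0..<r}. of_nat ((m+i) choose m))"
proof -
  have e: "((k+j) choose (m+i)) * ((m+i) choose m) = ((k+j) choose m) * ((x+j) choose i)" for i j
  proof (cases "m + i \<le> k + j")
    case True
    have "((k+j) choose (m+i)) * ((m+i) choose m) = ((k+j) choose m) * ((k+j-m) choose (m+i-m))"
      using choose_mult[of m "m+i" "k+j"] True by simp
    thus ?thesis using k by (simp add: add.assoc)
  next
    case False hence "k + j < m + i" "x + j < i" using k by auto
    thus ?thesis by (simp add: binomial_eq_0)
  qed
  have eqM: "mat r r (\<lambda>(i,j). of_nat ((k+j) choose (m+i))) =
        mat r r (\<lambda>(i,j). (1 / of_nat ((m+i) choose m)) * of_nat ((k+j) choose m) * (mat r r (\<lambda>(i,j). of_nat ((x+j) choose i)) :: rat mat) $$ (i,j))"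
  proof (rule eq_matI)
    fix i j assume "i < dim_row (mat r r (\<lambda>(i,j). (1 / of_nat ((m+i) choose m)) * of_nat ((k+j) choose m) * (mat r r (\<lambda>(i,j). of_nat ((x+j) choose i)) :: rat mat) $$ (i,j)))"
      "j < dim_col (mat r r (\<lambda>(i,j). (1 / of_nat ((m+i) choose m)) * of_nat ((k+j) choose m) * (mat r r (\<lambda>(i,j). of_nat ((x+j) choose i)) :: rat mat) $$ (i,j)))"
    hence ir: "i < r" and jr: "j < r" by auto
    have pos: "(of_nat ((m+i) choose m) :: rat) \<noteq> 0" by simp
    have eqn: "(of_nat ((k+j) choose (m+i)) :: rat) * of_nat ((m+i) choose m) = of_nat ((k+j) choose m) * of_nat ((x+j) choose i)"
      using arg_cong[OF e[of j i], of "of_nat :: nat \<Rightarrow> rat"] by (simp only: of_nat_mult)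
    have l: "mat r r (\<lambda>(i,j). (of_nat ((k+j) choose (m+i)) :: rat)) $$ (i,j) = of_nat ((k+j) choose (m+i))" using ir jr by simp
    have rr: "mat r r (\<lambda>(i,j). (1 / of_nat ((m+i) choose m)) * of_nat ((k+j) choose m) * (mat r r (\<lambda>(i,j). of_nat ((x+j) choose i)) :: rat mat) $$ (i,j)) $$ (i,j)
       = (1 / of_nat ((m+i) choose m)) * of_nat ((k+j) choose m) * of_nat ((x+j) choose i)" using ir jr by simp
    show "mat r r (\<lambda>(i,j). (of_nat ((k+j) choose (m+i)) :: rat)) $$ (i,j) = mat r r (\<lambda>(i,j). (1 / of_nat ((m+i) choose m)) * of_nat ((k+j) choose m) * (mat r r (\<lambda>(i,j). of_nat ((x+j) choose i)) :: rat mat) $$ (i,j)) $$ (i,j)"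
      unfolding l rr by (rule aux_div[OF eqn pos])
  qed simp_all
  have "det (mat r r (\<lambda>(i,j). of_nat ((k+j) choose (m+i))) :: rat mat) = det (mat r r (\<lambda>(i,j). (1 / of_nat ((m+i) choose m)) * of_nat ((k+j) choose m) * (mat r r (\<lambda>(i,j). of_nat ((x+j) choose i)) :: rat mat) $$ (i,j)))"
    by (simp only: eqM)
  also have "\<dots> = (\<Prod>i\<in>{0..<r}. 1 / of_nat ((m+i) choose m)) * (\<Prod>j\<in>{0..<r}. of_nat ((k+j) choose m)) * det (mat r r (\<lambda>(i,j). of_nat ((x+j) choose i)) :: rat mat)"
    by (rule det_scale[of "mat r r (\<lambda>(i,j). of_nat ((x+j) choose i))" r "\<lambda>i. 1 / of_nat ((m+i) choose m)" "\<lambda>j. of_nat ((k+j) choose m)"], simp)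
  also have "\<dots> = (\<Prod>j\<in>{0..<r}. of_nat ((k+j) choose m)) / (\<Prod>i\<in>{0..<r}. of_nat ((m+i) choose m))"
  proof -
    have "(\<Prod>i\<in>{0..<r}. 1 / (of_nat ((m+i) choose m)::rat)) = 1 / (\<Prod>i\<in>{0..<r}. of_nat ((m+i) choose m))"
      using prod_dividef[of "\<lambda>_. (1::rat)" "\<lambda>i. of_nat ((m+i) choose m)" "{0..<r}"] by (simp only: prod.neutral_const)
    thus ?thesis unfolding det_B by (simp only: mult_1_right) (simp add: divide_inverse ac_simps)
  qed
  finally show ?thesis .
qed



lemma prod_shift_fact: "(\<Prod>j\<in>{1..m}. (of_nat (a+j) :: rat)) = fact (a+m) / fact a"
proof (induction m)
  case 0 show ?case by simp
next
  case (Suc m)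
  have "(\<Prod>j\<in>{1..Suc m}. (of_nat (a+j) :: rat)) = (\<Prod>j\<in>{1..m}. (of_nat (a+j) :: rat)) * of_nat (a + Suc m)"
    by (simp add: prod.cl_ivl_Suc)
  also have "\<dots> = fact (a+m) / fact a * of_nat (a + Suc m)" using Suc by simp
  also have "\<dots> = fact (a + Suc m) / fact a" by (simp add: fact_Suc[of "a+m"] del: fact_Suc)
  finally show ?case .
qed

lemma hog_step:
  fixes x m r :: nat
  shows "(\<Prod>j\<in>{1..m}. (of_nat (x+j+r) :: rat)) / (\<Prod>j\<in>{1..m}. of_nat (j+r))
     = of_nat ((x+m+r) choose m) / of_nat ((m+r) choose m)"
proof -
  have a: "(\<Prod>j\<in>{1..m}. (of_nat (x+j+r) :: rat)) = fact (x+r+m) / fact (x+r)"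
  proof -
    have "(\<Prod>j\<in>{1..m}. (of_nat (x+j+r) :: rat)) = (\<Prod>j\<in>{1..m}. of_nat ((x+r)+j))"
      by (rule prod.cong) (simp_all add: ac_simps)
    thus ?thesis by (simp only: prod_shift_fact[where m=m and a="x+r"])
  qed
  have b: "(\<Prod>j\<in>{1..m}. (of_nat (j+r) :: rat)) = fact (r+m) / fact r"
  proof -
    have "(\<Prod>j\<in>{1..m}. (of_nat (j+r) :: rat)) = (\<Prod>j\<in>{1..m}. of_nat (r+j))"
      by (rule prod.cong) (simp_all add: ac_simps)
    thus ?thesis by (simp only: prod_shift_fact[where m=m and a="r"])
  qed
  have c: "(of_nat ((x+m+r) choose m) :: rat) = fact (x+m+r) / (fact m * fact (x+r))"
    using binomial_fact[of m "x+m+r", where 'a=rat] by simp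
  have d: "(of_nat ((m+r) choose m) :: rat) = fact (m+r) / (fact m * fact r)"
    using binomial_fact[of m "m+r", where 'a=rat] by simp
  show ?thesis unfolding a b c d by (simp add: field_simps ac_simps)
qed

lemma hoggatt_prod:
  assumes "m \<le> k"
  shows "hoggatt r (int k) (int m) = (\<Prod>j\<in>{0..<r}. of_nat ((k+j) choose m)) / (\<Prod>i\<in>{0..<r}. of_nat ((m+i) choose m))"
proof -
  define x where "x = k - m"
  have k: "k = m + x" using assms x_def by simp
  have h: "hoggatt r (int k) (int m) = (\<Prod>j\<in>{1..m}. pochhammer (of_nat (x+j) :: rat) r / pochhammer (of_nat j) r)"
    unfolding hoggatt_def using assms
    by (auto intro!: prod.cong simp: k)
  show ?thesis unfolding h
  proof (induction r)
    case 0 show ?case by simp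
  next
    case (Suc r)
    have "(\<Prod>j\<in>{1..m}. pochhammer (of_nat (x+j) :: rat) (Suc r) / pochhammer (of_nat j) (Suc r))
       = (\<Prod>j\<in>{1..m}. (pochhammer (of_nat (x+j) :: rat) r / pochhammer (of_nat j) r) * (of_nat (x+j+r) / of_nat (j+r)))"
      by (rule prod.cong, simp_all add: pochhammer_Suc)
    also have "\<dots> = (\<Prod>j\<in>{1..m}. pochhammer (of_nat (x+j) :: rat) r / pochhammer (of_nat j) r) *
        ((\<Prod>j\<in>{1..m}. (of_nat (x+j+r) :: rat)) / (\<Prod>j\<in>{1..m}. of_nat (j+r)))"
      by (simp add: prod.distrib prod_dividef)
    also have "\<dots> = (\<Prod>j\<in>{0..<r}. of_nat ((k+j) choose m)) / (\<Prod>i\<in>{0..<r}. of_nat ((m+i) choose m)) *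
        (of_nat ((k+r) choose m) / of_nat ((m+r) choose m))"
      unfolding Suc hog_step by (simp add: k ac_simps)
    also have "\<dots> = (\<Prod>j\<in>{0..<Suc r}. of_nat ((k+j) choose m)) / (\<Prod>i\<in>{0..<Suc r}. of_nat ((m+i) choose m))"
      by simp
    finally show ?case .
  qed
qed


lemma det_zero_col0:
  fixes A :: "'a::comm_ring_1 mat"
  assumes A: "A \<in> carrier_mat n n" and n: "0 < n" and z: "\<And>i. i < n \<Longrightarrow> A $$ (i,0) = 0"
  shows "det A = 0"
proof -
  have "det A = (\<Sum>i<n. A $$ (i,0) * cofactor A i 0)" by (rule laplace_expansion_column[OF A n])
  also have "\<dots> = 0" by (rule sum.neutral, auto simp: z)
  finally show ?thesis .
qed

lemma sum_single_J:
  fixes l r :: nat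
  assumes "l < r"
  shows "(\<Sum>t\<in>{0..<r}. (if l + t = r - 1 then 1 else 0) * (f t :: rat)) = f (r - 1 - l)"
proof -
  have "(\<Sum>t\<in>{0..<r}. (if l + t = r - 1 then 1 else 0) * f t) = (\<Sum>t\<in>{0..<r}. if t = r - 1 - l then f t else 0)"
  proof -
    have iff: "(l + t = r - 1) = (t = r - 1 - l)" for t using assms by linarith
    show ?thesis by (rule sum.cong[OF refl], unfold iff, simp)
  qed
  also have "\<dots> = f (r - 1 - l)" using assms by (simp add: sum.delta)
  finally show ?thesis .
qed

theorem theorem1:
  fixes r m k :: nat
  assumes "r \<ge> 1"
  shows "of_int ((-1) ^ (r choose 2) *
           det (mat r r (\<lambda>(i, j). int ((k + i + j) choose (m + r - 1)))))
         = hoggatt r (int k) (int m)"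
proof (cases "m \<le> k")
  case False
  have "det (mat r r (\<lambda>(i, j). int ((k + i + j) choose (m + r - 1)))) = 0"
    by (rule det_zero_col0, insert assms False, auto simp: binomial_eq_0)
  moreover have "hoggatt r (int k) (int m) = 0" using False unfolding hoggatt_def by simp
  ultimately show ?thesis by simp
next
  case True
  define x where "x = k - m"
  have k: "k = m + x" using True x_def by simp
  define N where "N = m + r - 1"
  define Mq where "Mq = (mat r r (\<lambda>(i, j). of_nat ((k + i + j) choose N)) :: rat mat)"
  define Lq where "Lq = (mat r r (\<lambda>(i, l). of_nat (i choose l)) :: rat mat)"
  define A2 where "A2 = (mat r r (\<lambda>(l, j). of_nat ((k + j) choose (N - l))) :: rat mat)"
  define Jq where "Jq = (mat r r (\<lambda>(i,j). if i + j = r - 1 then 1 else 0) :: rat mat)"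
  define Aq where "Aq = (mat r r (\<lambda>(i,j). of_nat ((k+j) choose (m+i))) :: rat mat)"
  have mapM: "map_mat of_int (mat r r (\<lambda>(i, j). int ((k + i + j) choose (m + r - 1)))) = Mq"
    unfolding Mq_def N_def by (rule eq_matI, auto)
  have M1: "Mq = Lq * A2"
  proof (rule eq_matI)
    fix i j assume "i < dim_row (Lq * A2)" "j < dim_col (Lq * A2)"
    hence ir: "i < r" and jr: "j < r" by (auto simp: Lq_def A2_def)
    have "(Lq * A2) $$ (i,j) = (\<Sum>l\<in>{0..<r}. of_nat (i choose l) * of_nat ((k + j) choose (N - l)))"
      using ir jr unfolding Lq_def A2_def by (auto simp: scalar_prod_def intro!: sum.cong)
    also have "\<dots> = (\<Sum>l\<in>{..N}. of_nat ((i choose l) * ((k + j) choose (N - l))))"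
    proof (rule sum.mono_neutral_cong_left)
      show "finite {..N}" by simp
      show "{0..<r} \<subseteq> {..N}" using assms unfolding N_def by auto
      show "\<forall>l\<in>{..N} - {0..<r}. (of_nat ((i choose l) * ((k + j) choose (N - l))) :: rat) = 0"
        using ir by (auto simp: binomial_eq_0)
      show "\<And>l. l \<in> {0..<r} \<Longrightarrow> (of_nat (i choose l) * of_nat ((k + j) choose (N - l)) :: rat) = of_nat ((i choose l) * ((k + j) choose (N - l)))"
        by simp
    qed
    also have "\<dots> = of_nat ((i + (k + j)) choose N)"
      unfolding of_nat_sum[symmetric] vandermonde ..
    finally show "Mq $$ (i,j) = (Lq * A2) $$ (i,j)" using ir jr unfolding Mq_def by (simp add: ac_simps)
  qed (auto simp: Mq_def Lq_def A2_def)
  have M2: "A2 = Jq * Aq"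
  proof (rule eq_matI)
    fix l j assume "l < dim_row (Jq * Aq)" "j < dim_col (Jq * Aq)"
    hence lr: "l < r" and jr: "j < r" by (auto simp: Jq_def Aq_def)
    have "(Jq * Aq) $$ (l,j) = (\<Sum>t\<in>{0..<r}. (if l + t = r - 1 then 1 else 0) * (of_nat ((k+j) choose (m+t)) :: rat))"
      using lr jr unfolding Jq_def Aq_def by (auto simp: scalar_prod_def intro!: sum.cong)
    also have "\<dots> = of_nat ((k+j) choose (m + (r - 1 - l)))" by (rule sum_single_J[OF lr])
    also have "m + (r - 1 - l) = N - l" unfolding N_def using lr by simp
    finally show "A2 $$ (l,j) = (Jq * Aq) $$ (l,j)" using lr jr unfolding A2_def by simp
  qed (auto simp: Jq_def Aq_def A2_def)
  have dL: "det Lq = 1" by (rule det_unit_lower, auto simp: Lq_def binomial_eq_0)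
  have dJ: "det Jq = (-1)^(r choose 2)" unfolding Jq_def by (rule det_J)
  have dA: "det Aq = (\<Prod>j\<in>{0..<r}. of_nat ((k+j) choose m)) / (\<Prod>i\<in>{0..<r}. of_nat ((m+i) choose m))"
    unfolding Aq_def by (rule det_A[OF k])
  have "det Mq = det Lq * (det Jq * det Aq)"
    unfolding M1 M2
    by (subst det_mult[of _ r], auto simp: Lq_def Jq_def Aq_def det_mult[of _ r])
  hence dM: "det Mq = (-1)^(r choose 2) * hoggatt r (int k) (int m)"
    using dL dJ dA hoggatt_prod[OF True] by simp
  have "of_int ((-1) ^ (r choose 2) * det (mat r r (\<lambda>(i, j). int ((k + i + j) choose (m + r - 1)))))
      = ((-1) ^ (r choose 2) :: rat) * det Mq"
    unfolding mapM[symmetric] by (simp add: of_int_hom.hom_det)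
  also have "\<dots> = ((-1) ^ (r choose 2) * (-1) ^ (r choose 2)) * hoggatt r (int k) (int m)"
    unfolding dM by (simp add: ac_simps)
  also have "((-1::rat) ^ (r choose 2) * (-1) ^ (r choose 2)) = 1"
    by (simp add: power_add[symmetric])
  finally show ?thesis by simp
qed

end
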